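(* Let $\mathcal M,\mathcal M'$ be finite polyptych lattices over $F$ with index sets $I,I'$, and let $\mathrm{pr}:\mathcal M\times\mathcal M'\to\mathcal M$, $\mathrm{pr}':\mathcal M\times\mathcal M'\to\mathcal M'$ be the projections on sets of elements. Then $(p,p')\mapsto p\circ\mathrm{pr}+p'\circ\mathrm{pr}'$ is a bijection $\mathrm{Sp}(\mathcal M)\times\mathrm{Sp}(\mathcal M')\to\mathrm{Sp}(\mathcal M\times\mathcal M')$, and it maps $\mathrm{Sp}(\mathcal M,\alpha)\times\mathrm{Sp}(\mathcal M',\alpha')$ into $\mathrm{Sp}(\mathcal M\times\mathcal M',(\alpha,\alpha'))$ for all $\alpha\in I,\alpha'\in I'$.
   Context: Fix a subring $F$ with $\mathbb Z\subseteq F\subseteq\mathbb R$. A polyptych lattice of rank $r$ over $F$ is a collection $\{M_\alpha\}_{\alpha\in I}$ of free $F$-modules of rank $r$ with piecewise $F$-linear maps (continuous and $F$-linear on each cone of some complete $F$-rational fan) $\mu_{\alpha,\beta}:M_\alpha\to M_\beta$ with $\mu_{\alpha,\alpha}=\mathrm{id}$, $\mu_{\alpha,\beta}=\mu_{\beta,\alpha}^{-1}$, $\mu_{\beta,\gamma}\circ\mu_{\alpha,\beta}=\mu_{\alpha,\gamma}$; finite if $I$ is finite. Elements are classes of $\bigsqcup M_\alpha$ under $m_\alpha\sim\mu_{\alpha,\beta}(m_\alpha)$, $\pi_\alpha$ the chart maps, $m+_\alpha m':=\pi_\alpha^{-1}(\pi_\alpha(m)+\pi_\alpha(m'))$, $\lambda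 m:=\pi_\alpha^{-1}(\lambda\pi_\alpha(m))$ ($\lambda\ge 0$). A point is $p:\mathcal M\to F$ with $p(m)+p(m')=\min_\alpha p(m+_\alpha m')$ and $p(\lambda m)=\lambda p(m)$ ($\lambda\in F_{\ge0}$); $\mathrm{Sp}(\mathcal M)$ is the set of points and $\mathrm{Sp}(\mathcal M,\alpha)$ those $p$ with $p\circ\pi_\alpha^{-1}$ $F$-linear. The product polyptych lattice $\mathcal M\times\mathcal M'$ (rank $r+r'$) has charts $M_\alpha\times M'_{\alpha'}$ indexed by $(\alpha,\alpha')\in I\times I'$ and mutations $\mu_{\alpha,\beta}\times\mu'_{\alpha',\beta'}$; its elements are pairs $(m,m')$. *)

theory Defs
  imports "HOL-Analysis.Analysis"
begin

definition subring_R :: "real set \<Rightarrow> bool" where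
  "subring_R F \<longleftrightarrow> \<int> \<subseteq> F \<and> (\<forall>x\<in>F. \<forall>y\<in>F. x + y \<in> F \<and> x * y \<in> F \<and> - x \<in> F)"

text \<open>The F-lattice spanned by the standard basis; it is a free F-module of rank DIM('a).\<close>
definition Lat :: "real set \<Rightarrow> 'a::euclidean_space set" where
  "Lat F = {x. \<forall>b\<in>Basis. x \<bullet> b \<in> F}"

definition F_linear_map :: "real set \<Rightarrow> ('a::euclidean_space \<Rightarrow> 'a) \<Rightarrow> bool" where
  "F_linear_map F L \<longleftrightarrow> linear L \<and> L ` Lat F \<subseteq> Lat F"

definition cone_gen :: "'a::euclidean_space set \<Rightarrow> 'a set" where
  "cone_gen S = {y. \<exists>c. (\<forall>v\<in>S. 0 \<le> c v) \<and> y = (\<Sum>v\<in>S. c v *\<^sub>R v)}"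

definition F_rational_cone :: "real set \<Rightarrow> 'a::euclidean_space set \<Rightarrow> bool" where
  "F_rational_cone F \<sigma> \<longleftrightarrow>
     (\<exists>S. finite S \<and> S \<subseteq> Lat F \<and> \<sigma> = cone_gen S) \<and> \<sigma> \<inter> uminus ` \<sigma> = {0}"

definition complete_F_fan :: "real set \<Rightarrow> 'a::euclidean_space set set \<Rightarrow> bool" where
  "complete_F_fan F \<Sigma> \<longleftrightarrow>
     finite \<Sigma> \<and> (\<forall>\<sigma>\<in>\<Sigma>. F_rational_cone F \<sigma>) \<and>
     (\<forall>\<sigma>\<in>\<Sigma>. \<forall>\<tau>. \<tau> face_of \<sigma> \<and> \<tau> \<noteq> {} \<longrightarrow> \<tau> \<in> \<Sigma>) \<and>
     (\<forall>\<sigma>\<in>\<Sigma>. \<forall>\<tau>\<in>\<Sigma>. (\<sigma> \<inter> \<tau>) face_of \<sigma> \<and> (\<sigma> \<inter> \<tau>) face_of \<tau>) \<and>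
     \<Union>\<Sigma> = UNIV"

text \<open>Piecewise F-linear map M -> M: F-linear on (the lattice points of) each cone of some
  complete F-rational fan.  (Continuity is then automatic by the pasting lemma.)\<close>
definition piecewise_F_linear :: "real set \<Rightarrow> ('a::euclidean_space \<Rightarrow> 'a) \<Rightarrow> bool" where
  "piecewise_F_linear F f \<longleftrightarrow>
     f ` Lat F \<subseteq> Lat F \<and>
     (\<exists>\<Sigma>. complete_F_fan F \<Sigma> \<and>
        (\<forall>\<sigma>\<in>\<Sigma>. \<exists>L. F_linear_map F L \<and> (\<forall>x\<in>\<sigma> \<inter> Lat F. f x = L x)))"

text \<open>A polyptych lattice of rank DIM('a) over F with index set I and mutations mu.
  All charts M_alpha are identified with Lat F (after choosing bases).\<close>
definition polyptych :: "real set \<Rightarrow> 'i set \<Rightarrow> ('i \<Rightarrow> 'i \<Rightarrow> 'a::euclidean_space \<Rightarrow> 'a) \<Rightarrow> bool" where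
  "polyptych F I mu \<longleftrightarrow>
     I \<noteq> {} \<and>
     (\<forall>\<alpha>\<in>I. \<forall>\<beta>\<in>I. piecewise_F_linear F (mu \<alpha> \<beta>)) \<and>
     (\<forall>\<alpha>\<in>I. \<forall>x\<in>Lat F. mu \<alpha> \<alpha> x = x) \<and>
     (\<forall>\<alpha>\<in>I. \<forall>\<beta>\<in>I. \<forall>x\<in>Lat F. mu \<beta> \<alpha> (mu \<alpha> \<beta> x) = x) \<and>
     (\<forall>\<alpha>\<in>I. \<forall>\<beta>\<in>I. \<forall>\<gamma>\<in>I. \<forall>x\<in>Lat F. mu \<beta> \<gamma> (mu \<alpha> \<beta> x) = mu \<alpha> \<gamma> x)"

text \<open>An element (class of the disjoint union) is represented by its family of coordinates
  in all charts; pi_alpha(m) = m alpha.  chart_inv I mu alpha x is pi_alpha^{-1}(x).\<close>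
definition chart_inv :: "'i set \<Rightarrow> ('i \<Rightarrow> 'i \<Rightarrow> 'a \<Rightarrow> 'a) \<Rightarrow> 'i \<Rightarrow> 'a \<Rightarrow> ('i \<Rightarrow> 'a)" where
  "chart_inv I mu \<alpha> x = (\<lambda>\<beta>. if \<beta> \<in> I then mu \<alpha> \<beta> x else undefined)"

definition elems :: "real set \<Rightarrow> 'i set \<Rightarrow> ('i \<Rightarrow> 'i \<Rightarrow> 'a::euclidean_space \<Rightarrow> 'a) \<Rightarrow> ('i \<Rightarrow> 'a) set" where
  "elems F I mu = {chart_inv I mu \<alpha> x | \<alpha> x. \<alpha> \<in> I \<and> x \<in> Lat F}"

definition padd :: "'i set \<Rightarrow> ('i \<Rightarrow> 'i \<Rightarrow> 'a::euclidean_space \<Rightarrow> 'a) \<Rightarrow> 'i \<Rightarrow> ('i \<Rightarrow> 'a) \<Rightarrow> ('i \<Rightarrow> 'a) \<Rightarrow> ('i \<Rightarrow> 'a)" where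
  "padd I mu \<alpha> m m' = chart_inv I mu \<alpha> (m \<alpha> + m' \<alpha>)"

definition pscale :: "'i set \<Rightarrow> ('i \<Rightarrow> 'i \<Rightarrow> 'a::euclidean_space \<Rightarrow> 'a) \<Rightarrow> 'i \<Rightarrow> real \<Rightarrow> ('i \<Rightarrow> 'a) \<Rightarrow> ('i \<Rightarrow> 'a)" where
  "pscale I mu \<alpha> c m = chart_inv I mu \<alpha> (c *\<^sub>R m \<alpha>)"

text \<open>Points (for finite I); a point is a function elems -> F, extensional outside elems.\<close>
definition Sp :: "real set \<Rightarrow> 'i set \<Rightarrow> ('i \<Rightarrow> 'i \<Rightarrow> 'a::euclidean_space \<Rightarrow> 'a) \<Rightarrow> (('i \<Rightarrow> 'a) \<Rightarrow> real) set" where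
  "Sp F I mu = {p \<in> elems F I mu \<rightarrow>\<^sub>E F.
      (\<forall>m\<in>elems F I mu. \<forall>m'\<in>elems F I mu.
          p m + p m' = Min ((\<lambda>\<alpha>. p (padd I mu \<alpha> m m')) ` I)) \<and>
      (\<forall>c\<in>F. c \<ge> 0 \<longrightarrow> (\<forall>m\<in>elems F I mu. \<forall>\<alpha>\<in>I. p (pscale I mu \<alpha> c m) = c * p m))}"

definition F_linear_functional :: "real set \<Rightarrow> ('a::euclidean_space \<Rightarrow> real) \<Rightarrow> bool" where
  "F_linear_functional F f \<longleftrightarrow>
     (\<forall>x\<in>Lat F. \<forall>y\<in>Lat F. f (x + y) = f x + f y) \<and>
     (\<forall>c\<in>F. \<forall>x\<in>Lat F. f (c *\<^sub>R x) = c * f x)"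

definition Sp_chart :: "real set \<Rightarrow> 'i set \<Rightarrow> ('i \<Rightarrow> 'i \<Rightarrow> 'a::euclidean_space \<Rightarrow> 'a) \<Rightarrow> 'i \<Rightarrow> (('i \<Rightarrow> 'a) \<Rightarrow> real) set" where
  "Sp_chart F I mu \<alpha> = {p \<in> Sp F I mu. F_linear_functional F (\<lambda>x. p (chart_inv I mu \<alpha> x))}"

text \<open>Product polyptych lattice: charts M_alpha x M'_alpha' (in 'a x 'b, rank r + r'),
  mutations mu x mu'.\<close>
definition prod_mu :: "('i \<Rightarrow> 'i \<Rightarrow> 'a \<Rightarrow> 'a) \<Rightarrow> ('j \<Rightarrow> 'j \<Rightarrow> 'b \<Rightarrow> 'b) \<Rightarrow>
    ('i \<times> 'j) \<Rightarrow> ('i \<times> 'j) \<Rightarrow> ('a \<times> 'b) \<Rightarrow> ('a \<times> 'b)" where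
  "prod_mu mu nu = (\<lambda>(\<alpha>, \<alpha>') (\<beta>, \<beta>') (x, y). (mu \<alpha> \<beta> x, nu \<alpha>' \<beta>' y))"

definition pr1 :: "'i set \<Rightarrow> 'j set \<Rightarrow> (('i \<times> 'j) \<Rightarrow> ('a \<times> 'b)) \<Rightarrow> ('i \<Rightarrow> 'a)" where
  "pr1 I J E = (\<lambda>\<alpha>. if \<alpha> \<in> I then fst (E (\<alpha>, SOME \<beta>. \<beta> \<in> J)) else undefined)"

definition pr2 :: "'i set \<Rightarrow> 'j set \<Rightarrow> (('i \<times> 'j) \<Rightarrow> ('a \<times> 'b)) \<Rightarrow> ('j \<Rightarrow> 'b)" where
  "pr2 I J E = (\<lambda>\<beta>. if \<beta> \<in> J then snd (E (SOME \<alpha>. \<alpha> \<in> I, \<beta>)) else undefined)"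

definition sum_point :: "real set \<Rightarrow> 'i set \<Rightarrow> ('i \<Rightarrow> 'i \<Rightarrow> 'a::euclidean_space \<Rightarrow> 'a) \<Rightarrow>
    'j set \<Rightarrow> ('j \<Rightarrow> 'j \<Rightarrow> 'b::euclidean_space \<Rightarrow> 'b) \<Rightarrow>
    (('i \<Rightarrow> 'a) \<Rightarrow> real) \<times> (('j \<Rightarrow> 'b) \<Rightarrow> real) \<Rightarrow> ((('i \<times> 'j) \<Rightarrow> ('a \<times> 'b)) \<Rightarrow> real)" where
  "sum_point F I mu J nu = (\<lambda>(p, p').
     restrict (\<lambda>E. p (pr1 I J E) + p' (pr2 I J E)) (elems F (I \<times> J) (prod_mu mu nu)))"

end

theory Submission
  imports Defs
begin

lemma Lat_add: "subring_R F \<Longrightarrow> x\<in>Lat F \<Longrightarrow> y\<in>Lat F \<Longrightarrow> x+y \<in> Lat F"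
  by (simp add: Lat_def inner_add_left subring_R_def)
lemma Lat_scale: "subring_R F \<Longrightarrow> c\<in>F \<Longrightarrow> x\<in>Lat F \<Longrightarrow> c *\<^sub>R x \<in> Lat F"
  by (simp add: Lat_def subring_R_def)
lemma zero_F: "subring_R F \<Longrightarrow> 0 \<in> F"
  unfolding subring_R_def by auto
lemma Lat_zero: "subring_R F \<Longrightarrow> 0 \<in> Lat F"
  by (simp add: Lat_def zero_F)
lemma Lat_prod: "((x,y) \<in> Lat F) \<longleftrightarrow> x \<in> Lat F \<and> y \<in> Lat F"
  by (simp add: Lat_def Basis_prod_def ball_Un inner_Pair)

lemma mu_Lat: "polyptych F I mu \<Longrightarrow> a\<in>I \<Longrightarrow> b\<in>I \<Longrightarrow> x\<in>Lat F \<Longrightarrow> mu a b x \<in> Lat F"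
  unfolding polyptych_def piecewise_F_linear_def by blast

lemma mu_zero: fixes mu :: "'i \<Rightarrow> 'i \<Rightarrow> 'a::euclidean_space \<Rightarrow> 'a"
  assumes "subring_R F" "polyptych F I mu" "a\<in>I" "b\<in>I" shows "mu a b 0 = 0"
proof -
  from assms obtain \<Sigma> where S: "complete_F_fan F \<Sigma>" and
    L: "\<forall>\<sigma>\<in>\<Sigma>. \<exists>L. F_linear_map F L \<and> (\<forall>x\<in>\<sigma> \<inter> Lat F. mu a b x = L x)"
    unfolding polyptych_def piecewise_F_linear_def by blast
  from S have "\<Union>\<Sigma> = UNIV" by (simp add: complete_F_fan_def)
  then obtain \<sigma> where "\<sigma>\<in>\<Sigma>" "0\<in>\<sigma>" by blast
  with L obtain L :: "'a \<Rightarrow> 'a" where "linear L" "mu a b 0 = L 0"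
    using Lat_zero[OF assms(1)] unfolding F_linear_map_def by blast
  then show ?thesis by (simp add: linear_0)
qed

lemma chart_change: "polyptych F I mu \<Longrightarrow> a\<in>I \<Longrightarrow> b\<in>I \<Longrightarrow> x\<in>Lat F \<Longrightarrow>
   chart_inv I mu b (mu a b x) = chart_inv I mu a x"
  unfolding polyptych_def chart_inv_def by auto

lemma elemsE: "m \<in> elems F I mu \<Longrightarrow> (\<And>a x. a\<in>I \<Longrightarrow> x\<in>Lat F \<Longrightarrow> m = chart_inv I mu a x \<Longrightarrow> P) \<Longrightarrow> P"
  unfolding elems_def by blast

lemma elemsI: "a\<in>I \<Longrightarrow> x\<in>Lat F \<Longrightarrow> chart_inv I mu a x \<in> elems F I mu"
  unfolding elems_def by blast

lemma elems_Lat: "polyptych F I mu \<Longrightarrow> m \<in> elems F I mu \<Longrightarrow> b\<in>I \<Longrightarrow> m b \<in> Lat F"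
  by (erule elemsE) (auto simp: chart_inv_def mu_Lat)

lemma elems_chart: assumes "polyptych F I mu" "m \<in> elems F I mu" "b\<in>I" shows "chart_inv I mu b (m b) = m"
proof -
  obtain a x where ax: "a\<in>I" "x\<in>Lat F" "m = chart_inv I mu a x" using assms(2) by (rule elemsE)
  then have "m b = mu a b x" using assms(3) by (simp add: chart_inv_def)
  then show ?thesis using chart_change[OF assms(1) ax(1) assms(3) ax(2)] ax(3) by simp
qed

lemma padd_elems: "subring_R F \<Longrightarrow> polyptych F I mu \<Longrightarrow> m \<in> elems F I mu \<Longrightarrow> n \<in> elems F I mu \<Longrightarrow> b\<in>I
  \<Longrightarrow> padd I mu b m n \<in> elems F I mu"
  unfolding padd_def by (intro elemsI) (auto intro: Lat_add elems_Lat)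

lemma pscale_elems: "subring_R F \<Longrightarrow> polyptych F I mu \<Longrightarrow> m \<in> elems F I mu \<Longrightarrow> c \<in> F \<Longrightarrow> b\<in>I
  \<Longrightarrow> pscale I mu b c m \<in> elems F I mu"
  unfolding pscale_def by (intro elemsI) (auto intro: Lat_scale elems_Lat)

definition zel :: "'i set \<Rightarrow> 'i \<Rightarrow> 'a::euclidean_space" where
  "zel I = (\<lambda>b. if b \<in> I then 0 else undefined)"

lemma zel_chart: "subring_R F \<Longrightarrow> polyptych F I mu \<Longrightarrow> a\<in>I \<Longrightarrow> chart_inv I mu a 0 = zel I"
  by (auto simp: chart_inv_def zel_def mu_zero)

lemma zel_elems: "subring_R F \<Longrightarrow> polyptych F I mu \<Longrightarrow> zel I \<in> elems F I mu"
proof -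
  assume a: "subring_R F" "polyptych F I mu"
  then obtain a0 where "a0 \<in> I" unfolding polyptych_def by blast
  then show ?thesis using a zel_chart[OF a \<open>a0\<in>I\<close>] elemsI[OF \<open>a0\<in>I\<close> Lat_zero[OF a(1)]]
    by metis
qed

lemma padd_zel: "subring_R F \<Longrightarrow> polyptych F I mu \<Longrightarrow> b\<in>I \<Longrightarrow> padd I mu b (zel I) (zel I) = zel I"
  by (simp add: padd_def zel_def zel_chart[unfolded zel_def])

lemma padd_zel_r: "subring_R F \<Longrightarrow> polyptych F I mu \<Longrightarrow> m \<in> elems F I mu \<Longrightarrow> b\<in>I \<Longrightarrow> padd I mu b m (zel I) = m"
  by (simp add: padd_def zel_def elems_chart)

lemma padd_zel_l: "subring_R F \<Longrightarrow> polyptych F I mu \<Longrightarrow> m \<in> elems F I mu \<Longrightarrow> b\<in>I \<Longrightarrow> padd I mu b (zel I) m = m"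
  by (simp add: padd_def zel_def elems_chart)

lemma pscale_zel: "subring_R F \<Longrightarrow> polyptych F I mu \<Longrightarrow> b\<in>I \<Longrightarrow> pscale I mu b c (zel I) = zel I"
  by (simp add: pscale_def zel_def zel_chart[unfolded zel_def])

lemma Sp_iff: "p \<in> Sp F I mu \<longleftrightarrow> p \<in> elems F I mu \<rightarrow>\<^sub>E F \<and>
      (\<forall>m\<in>elems F I mu. \<forall>m'\<in>elems F I mu.
          p m + p m' = Min ((\<lambda>\<alpha>. p (padd I mu \<alpha> m m')) ` I)) \<and>
      (\<forall>c\<in>F. c \<ge> 0 \<longrightarrow> (\<forall>m\<in>elems F I mu. \<forall>\<alpha>\<in>I. p (pscale I mu \<alpha> c m) = c * p m))"
  unfolding Sp_def by (rule mem_Collect_eq)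

lemma SpI: assumes "p \<in> elems F I mu \<rightarrow>\<^sub>E F"
  and "\<And>m m'. m \<in> elems F I mu \<Longrightarrow> m' \<in> elems F I mu \<Longrightarrow> p m + p m' = Min ((\<lambda>\<alpha>. p (padd I mu \<alpha> m m')) ` I)"
  and "\<And>c m \<alpha>. c \<in> F \<Longrightarrow> c \<ge> 0 \<Longrightarrow> m \<in> elems F I mu \<Longrightarrow> \<alpha> \<in> I \<Longrightarrow> p (pscale I mu \<alpha> c m) = c * p m"
  shows "p \<in> Sp F I mu"
  unfolding Sp_iff
  apply (intro conjI ballI allI impI)
    apply (rule assms(1))
   apply (rule assms(2); assumption)
  apply (rule assms(3); assumption)
  done

lemma SpD1: "p \<in> Sp F I mu \<Longrightarrow> p \<in> elems F I mu \<rightarrow>\<^sub>E F"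
  unfolding Sp_iff by (erule conjunct1)
lemma SpD2: assumes "p \<in> Sp F I mu" "m \<in> elems F I mu" "m' \<in> elems F I mu"
  shows "p m + p m' = Min ((\<lambda>\<alpha>. p (padd I mu \<alpha> m m')) ` I)"
proof -
  have "\<forall>m\<in>elems F I mu. \<forall>m'\<in>elems F I mu. p m + p m' = Min ((\<lambda>\<alpha>. p (padd I mu \<alpha> m m')) ` I)"
    using assms(1) unfolding Sp_iff by (elim conjE)
  then show ?thesis by (rule bspec[OF bspec[OF _ assms(2)] assms(3)])
qed
lemma SpD3: assumes "p \<in> Sp F I mu" "c \<in> F" "c \<ge> 0" "m \<in> elems F I mu" "\<alpha> \<in> I"
  shows "p (pscale I mu \<alpha> c m) = c * p m"
proof -
  have "\<forall>c\<in>F. c \<ge> 0 \<longrightarrow> (\<forall>m\<in>elems F I mu. \<forall>\<alpha>\<in>I. p (pscale I mu \<alpha> c m) = c * p m)"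
    using assms(1) unfolding Sp_iff by (elim conjE)
  then show ?thesis using assms(2-5) by simp
qed

lemma Sp_zel: assumes "subring_R F" "polyptych F I mu" "p \<in> Sp F I mu" shows "p (zel I) = 0"
proof -
  obtain a0 where a0: "a0 \<in> I" using assms unfolding polyptych_def by blast
  have "pscale I mu a0 0 (zel I) = zel I" using pscale_zel[OF assms(1,2) a0] .
  moreover have "p (pscale I mu a0 0 (zel I)) = 0 * p (zel I)"
    by (rule SpD3[OF assms(3) zero_F[OF assms(1)] _ zel_elems[OF assms(1,2)] a0]) simp
  ultimately show ?thesis by simp
qed

lemma Min_sum_prod: assumes "finite I" "finite J" "I \<noteq> {}" "J \<noteq> {}"
  shows "Min ((\<lambda>(a,b). f a + (g b::real)) ` (I \<times> J)) = Min (f ` I) + Min (g ` J)"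
proof (rule Min_eqI)
  show "finite ((\<lambda>(a,b). f a + g b) ` (I \<times> J))" using assms by simp
  show "\<And>y. y \<in> (\<lambda>(a,b). f a + g b) ` (I \<times> J) \<Longrightarrow> Min (f ` I) + Min (g ` J) \<le> y"
    using assms by (auto intro!: add_mono)
  have "Min (f ` I) \<in> f ` I" using assms by (intro Min_in) auto
  then obtain a where "a \<in> I" "f a = Min (f ` I)" by auto
  have "Min (g ` J) \<in> g ` J" using assms by (intro Min_in) auto
  then obtain b where "b \<in> J" "g b = Min (g ` J)" by auto
  note \<open>a \<in> I\<close> \<open>f a = Min (f ` I)\<close>
  show "Min (f ` I) + Min (g ` J) \<in> (\<lambda>(a,b). f a + g b) ` (I \<times> J)"
    using \<open>a \<in> I\<close> \<open>f a = Min (f ` I)\<close> \<open>b \<in> J\<close> \<open>g b = Min (g ` J)\<close> by (auto intro!: image_eqI[where x="(a,b)"])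
qed


definition pairE :: "'i set \<Rightarrow> 'j set \<Rightarrow> ('i \<Rightarrow> 'a) \<Rightarrow> ('j \<Rightarrow> 'b) \<Rightarrow> ('i \<times> 'j \<Rightarrow> 'a \<times> 'b)" where
  "pairE I J m m' = (\<lambda>b. if b \<in> I \<times> J then (m (fst b), m' (snd b)) else undefined)"

lemma chart_prod: "chart_inv (I\<times>J) (prod_mu mu nu) (a,a') (x,y) = pairE I J (chart_inv I mu a x) (chart_inv J nu a' y)"
  by (rule ext) (auto simp: chart_inv_def prod_mu_def pairE_def split: prod.splits)

lemma elems_undef: "m \<in> elems F I mu \<Longrightarrow> b \<notin> I \<Longrightarrow> m b = undefined"
  by (erule elemsE) (simp add: chart_inv_def)

lemma pr1_pairE: assumes "J \<noteq> {}" "m \<in> elems F I mu" shows "pr1 I J (pairE I J m m') = m"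
proof (rule ext)
  fix a
  have s: "(SOME b. b \<in> J) \<in> J" using assms(1) by (simp add: some_in_eq)
  show "pr1 I J (pairE I J m m') a = m a"
    using s elems_undef[OF assms(2)] by (auto simp: pr1_def pairE_def)
qed

lemma pr2_pairE: assumes "I \<noteq> {}" "m' \<in> elems F J nu" shows "pr2 I J (pairE I J m m') = m'"
proof (rule ext)
  fix a
  have s: "(SOME b. b \<in> I) \<in> I" using assms(1) by (simp add: some_in_eq)
  show "pr2 I J (pairE I J m m') a = m' a"
    using s elems_undef[OF assms(2)] by (auto simp: pr2_def pairE_def)
qed

lemma elemsP: assumes "I \<noteq> {}" "J \<noteq> {}" "E \<in> elems F (I\<times>J) (prod_mu mu nu)"
  shows "pr1 I J E \<in> elems F I mu \<and> pr2 I J E \<in> elems F J nu \<and> E = pairE I J (pr1 I J E) (pr2 I J E)"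
proof -
  obtain a w where aw: "a \<in> I\<times>J" "w \<in> Lat F" "E = chart_inv (I\<times>J) (prod_mu mu nu) a w"
    using assms(3) by (rule elemsE)
  obtain a1 a2 x y where "a = (a1,a2)" "w = (x,y)" by (cases a, cases w) auto
  with aw have h: "a1\<in>I" "a2\<in>J" "x\<in>Lat F" "y \<in> Lat F" "E = pairE I J (chart_inv I mu a1 x) (chart_inv J nu a2 y)"
    by (auto simp: Lat_prod chart_prod)
  have e1: "chart_inv I mu a1 x \<in> elems F I mu" using h by (intro elemsI)
  have e2: "chart_inv J nu a2 y \<in> elems F J nu" using h by (intro elemsI)
  have p1: "pr1 I J E = chart_inv I mu a1 x" using h(5) pr1_pairE[OF assms(2) e1] by simp
  have p2: "pr2 I J E = chart_inv J nu a2 y" using h(5) pr2_pairE[OF assms(1) e2] by simp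
  show ?thesis unfolding p1 p2 using h(5) e1 e2 by simp
qed

lemma pairE_elems: assumes "m \<in> elems F I mu" "m' \<in> elems F J nu"
  shows "pairE I J m m' \<in> elems F (I\<times>J) (prod_mu mu nu)"
proof -
  obtain a x where 1: "a\<in>I" "x\<in>Lat F" "m = chart_inv I mu a x" using assms(1) by (rule elemsE)
  obtain a' y where 2: "a'\<in>J" "y\<in>Lat F" "m' = chart_inv J nu a' y" using assms(2) by (rule elemsE)
  have "chart_inv (I\<times>J) (prod_mu mu nu) (a,a') (x,y) \<in> elems F (I\<times>J) (prod_mu mu nu)"
    using 1 2 by (intro elemsI) (auto simp: Lat_prod)
  then show ?thesis using 1 2 by (simp add: chart_prod)
qed

lemma pairE_app: "b\<in>I \<Longrightarrow> b'\<in>J \<Longrightarrow> pairE I J m m' (b,b') = (m b, m' b')"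
  by (simp add: pairE_def)

lemma padd_pairE: assumes "b\<in>I" "b'\<in>J"
  shows "padd (I\<times>J) (prod_mu mu nu) (b,b') (pairE I J m m') (pairE I J n n') =
    pairE I J (padd I mu b m n) (padd J nu b' m' n')"
  using assms by (simp add: padd_def pairE_app chart_prod)

lemma pscale_pairE: assumes "b\<in>I" "b'\<in>J"
  shows "pscale (I\<times>J) (prod_mu mu nu) (b,b') c (pairE I J m m') =
    pairE I J (pscale I mu b c m) (pscale J nu b' c m')"
  using assms by (simp add: pscale_def pairE_app chart_prod)


lemma image_fst_comp: "J \<noteq> {} \<Longrightarrow> (\<lambda>x. g (fst x)) ` (I \<times> J) = g ` I"
  by (auto simp: image_iff)
lemma image_snd_comp: "I \<noteq> {} \<Longrightarrow> (\<lambda>x. g (snd x)) ` (I \<times> J) = g ` J"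
  by (auto simp: image_iff)

lemma subring_add: "subring_R F \<Longrightarrow> x \<in> F \<Longrightarrow> y \<in> F \<Longrightarrow> x + y \<in> F"
  by (simp add: subring_R_def)

locale PP =
  fixes F :: "real set"
    and I :: "'i set" and mu :: "'i \<Rightarrow> 'i \<Rightarrow> 'a::euclidean_space \<Rightarrow> 'a"
    and J :: "'j set" and nu :: "'j \<Rightarrow> 'j \<Rightarrow> 'b::euclidean_space \<Rightarrow> 'b"
  assumes R: "subring_R F"
    and PI: "polyptych F I mu" and fI: "finite I"
    and PJ: "polyptych F J nu" and fJ: "finite J"
begin

abbreviation "EM \<equiv> elems F I mu"
abbreviation "EN \<equiv> elems F J nu"
abbreviation "EP \<equiv> elems F (I\<times>J) (prod_mu mu nu)"
abbreviation "S \<equiv> sum_point F I mu J nu"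

lemma Ine: "I \<noteq> {}" using PI by (simp add: polyptych_def)
lemma Jne: "J \<noteq> {}" using PJ by (simp add: polyptych_def)

lemma sp_app: "m \<in> EM \<Longrightarrow> m' \<in> EN \<Longrightarrow> S (p,p') (pairE I J m m') = p m + p' m'"
proof -
  assume a: "m \<in> EM" "m' \<in> EN"
  have "pr1 I J (pairE I J m m') = m" by (rule pr1_pairE[OF Jne a(1)])
  moreover have "pr2 I J (pairE I J m m') = m'" by (rule pr2_pairE[OF Ine a(2)])
  moreover have "pairE I J m m' \<in> EP" by (rule pairE_elems[OF a])
  ultimately show ?thesis by (simp add: sum_point_def)
qed

lemma Sp_F: "p \<in> Sp F I mu \<Longrightarrow> m \<in> EM \<Longrightarrow> p m \<in> F"
  by (drule SpD1) (auto simp: PiE_iff)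
lemma Sp_F': "p \<in> Sp F J nu \<Longrightarrow> m \<in> EN \<Longrightarrow> p m \<in> F"
  by (drule SpD1) (auto simp: PiE_iff)

lemma S_in: assumes p: "p \<in> Sp F I mu" and p': "p' \<in> Sp F J nu"
  shows "S (p,p') \<in> Sp F (I\<times>J) (prod_mu mu nu)"
proof -
  have ext: "S (p,p') \<in> EP \<rightarrow>\<^sub>E F"
  proof
    fix E assume E: "E \<in> EP"
    from elemsP[OF Ine Jne E] obtain m m' where "m \<in> EM" "m' \<in> EN" "E = pairE I J m m'" by blast
    then show "S (p,p') E \<in> F" using sp_app Sp_F[OF p] Sp_F'[OF p'] subring_add[OF R] by simp
  next
    fix E assume "E \<notin> EP" then show "S (p,p') E = undefined" by (simp add: sum_point_def)
  qed
  have add: "S (p,p') E + S (p,p') E' = Min ((\<lambda>\<alpha>. S (p,p') (padd (I\<times>J) (prod_mu mu nu) \<alpha> E E')) ` (I\<times>J))"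
    if E: "E \<in> EP" and E': "E' \<in> EP" for E E'
  proof -
    from elemsP[OF Ine Jne E] obtain m m' where mm: "m \<in> EM" "m' \<in> EN" "E = pairE I J m m'" by blast
    from elemsP[OF Ine Jne E'] obtain n n' where nn: "n \<in> EM" "n' \<in> EN" "E' = pairE I J n n'" by blast
    have "(\<lambda>\<alpha>. S (p,p') (padd (I\<times>J) (prod_mu mu nu) \<alpha> E E')) ` (I\<times>J)
        = (\<lambda>(a,b). p (padd I mu a m n) + p' (padd J nu b m' n')) ` (I\<times>J)"
    proof (rule image_cong[OF refl])
      fix x assume "x \<in> I \<times> J"
      then obtain a b where x: "x = (a,b)" "a \<in> I" "b \<in> J" by auto
      show "S (p,p') (padd (I\<times>J) (prod_mu mu nu) x E E') = (\<lambda>(a,b). p (padd I mu a m n) + p' (padd J nu b m' n')) x"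
        using x mm nn by (simp add: padd_pairE sp_app padd_elems[OF R PI] padd_elems[OF R PJ])
    qed
    also have "Min \<dots> = Min ((\<lambda>a. p (padd I mu a m n)) ` I) + Min ((\<lambda>b. p' (padd J nu b m' n')) ` J)"
      using Min_sum_prod[OF fI fJ Ine Jne] .
    also have "\<dots> = (p m + p n) + (p' m' + p' n')"
      using SpD2[OF p mm(1) nn(1)] SpD2[OF p' mm(2) nn(2)] by simp
    finally show ?thesis using mm nn sp_app by simp
  qed
  have sc: "S (p,p') (pscale (I\<times>J) (prod_mu mu nu) \<alpha> c E) = c * S (p,p') E"
    if c: "c \<in> F" "c \<ge> 0" and E: "E \<in> EP" and a: "\<alpha> \<in> I\<times>J" for c E \<alpha>
  proof -
    from elemsP[OF Ine Jne E] obtain m m' where mm: "m \<in> EM" "m' \<in> EN" "E = pairE I J m m'" by blast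
    obtain a b where x: "\<alpha> = (a,b)" "a \<in> I" "b \<in> J" using a by auto
    have "S (p,p') (pscale (I\<times>J) (prod_mu mu nu) \<alpha> c E) = p (pscale I mu a c m) + p' (pscale J nu b c m')"
      using x mm c by (simp add: pscale_pairE sp_app pscale_elems[OF R PI] pscale_elems[OF R PJ])
    also have "\<dots> = c * p m + c * p' m'" using SpD3[OF p c mm(1) x(2)] SpD3[OF p' c mm(2) x(3)] by simp
    finally show ?thesis using mm sp_app by (simp add: distrib_left)
  qed
  show ?thesis by (rule SpI[OF ext add sc])
qed

lemma S_inj: "inj_on S (Sp F I mu \<times> Sp F J nu)"
proof (rule inj_onI, clarify)
  fix p p' q q' assume p: "p \<in> Sp F I mu" and p': "p' \<in> Sp F J nu" and q: "q \<in> Sp F I mu"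
    and q': "q' \<in> Sp F J nu" and eq: "S (p,p') = S (q,q')"
  have zI: "zel I \<in> EM" and zJ: "zel J \<in> EN" using zel_elems[OF R PI] zel_elems[OF R PJ] .
  have "p m = q m" for m
  proof (cases "m \<in> EM")
    case True
    have "S (p,p') (pairE I J m (zel J)) = S (q,q') (pairE I J m (zel J))" using eq by simp
    then show ?thesis using True zJ sp_app Sp_zel[OF R PJ p'] Sp_zel[OF R PJ q'] by simp
  next
    case False then show ?thesis using PiE_arb[OF SpD1[OF p] False] PiE_arb[OF SpD1[OF q] False] by simp
  qed
  moreover have "p' m = q' m" for m
  proof (cases "m \<in> EN")
    case True
    have "S (p,p') (pairE I J (zel I) m) = S (q,q') (pairE I J (zel I) m)" using eq by simp
    then show ?thesis using True zI sp_app Sp_zel[OF R PI p] Sp_zel[OF R PI q] by simp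
  next
    case False then show ?thesis using PiE_arb[OF SpD1[OF p'] False] PiE_arb[OF SpD1[OF q'] False] by simp
  qed
  ultimately show "p = q \<and> p' = q'" by auto
qed

lemma S_surj: assumes P: "P \<in> Sp F (I\<times>J) (prod_mu mu nu)"
  shows "P \<in> S ` (Sp F I mu \<times> Sp F J nu)"
proof -
  have zI: "zel I \<in> EM" and zJ: "zel J \<in> EN" using zel_elems[OF R PI] zel_elems[OF R PJ] .
  obtain a0 where a0: "a0 \<in> I" using Ine by blast
  obtain b0 where b0: "b0 \<in> J" using Jne by blast
  have PF: "P E \<in> F" if "E \<in> EP" for E using SpD1[OF P] that by (auto simp: PiE_iff)
  have Padd: "P E + P E' = Min ((\<lambda>\<alpha>. P (padd (I\<times>J) (prod_mu mu nu) \<alpha> E E')) ` (I\<times>J))"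
    if "E \<in> EP" "E' \<in> EP" for E E' by (rule SpD2[OF P that])
  have Psc: "P (pscale (I\<times>J) (prod_mu mu nu) \<alpha> c E) = c * P E"
    if "c \<in> F" "c \<ge> 0" "E \<in> EP" "\<alpha> \<in> I\<times>J" for c E \<alpha> by (rule SpD3[OF P that])
  define p where "p = restrict (\<lambda>m. P (pairE I J m (zel J))) EM"
  define p' where "p' = restrict (\<lambda>m'. P (pairE I J (zel I) m')) EN"
  have p: "p \<in> Sp F I mu"
  proof -
    have "p \<in> EM \<rightarrow>\<^sub>E F" unfolding p_def by (auto intro!: PF pairE_elems zJ)
    moreover have "p m + p n = Min ((\<lambda>a. p (padd I mu a m n)) ` I)" if mn: "m \<in> EM" "n \<in> EM" for m n
    proof -
      have "p m + p n = Min ((\<lambda>\<alpha>. P (padd (I\<times>J) (prod_mu mu nu) \<alpha> (pairE I J m (zel J)) (pairE I J n (zel J)))) ` (I\<times>J))"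
        using mn zJ unfolding p_def by (simp add: Padd pairE_elems)
      also have "(\<lambda>\<alpha>. P (padd (I\<times>J) (prod_mu mu nu) \<alpha> (pairE I J m (zel J)) (pairE I J n (zel J)))) ` (I\<times>J)
          = (\<lambda>\<alpha>. p (padd I mu (fst \<alpha>) m n)) ` (I\<times>J)"
      proof (rule image_cong[OF refl])
        fix x assume "x \<in> I \<times> J"
        then obtain a b where x: "x = (a,b)" "a \<in> I" "b \<in> J" by auto
        show "P (padd (I\<times>J) (prod_mu mu nu) x (pairE I J m (zel J)) (pairE I J n (zel J))) = p (padd I mu (fst x) m n)"
          using x mn by (simp add: padd_pairE padd_zel[OF R PJ] p_def padd_elems[OF R PI])
      qed
      also have "\<dots> = (\<lambda>a. p (padd I mu a m n)) ` I" by (rule image_fst_comp[OF Jne])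
      finally show ?thesis .
    qed
    moreover have "p (pscale I mu a c m) = c * p m" if "c \<in> F" "c \<ge> 0" "m \<in> EM" "a \<in> I" for c m a
    proof -
      have "p (pscale I mu a c m) = P (pairE I J (pscale I mu a c m) (pscale J nu b0 c (zel J)))"
        using that by (simp add: p_def pscale_elems[OF R PI] pscale_zel[OF R PJ b0])
      also have "\<dots> = P (pscale (I\<times>J) (prod_mu mu nu) (a,b0) c (pairE I J m (zel J)))"
        using that b0 by (simp add: pscale_pairE)
      also have "\<dots> = c * P (pairE I J m (zel J))" by (rule Psc) (use that b0 zJ in \<open>auto intro: pairE_elems\<close>)
      also have "\<dots> = c * p m" using that by (simp add: p_def)
      finally show ?thesis .
    qed
    ultimately show ?thesis by (rule SpI)
  qed
  have p': "p' \<in> Sp F J nu"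
  proof -
    have "p' \<in> EN \<rightarrow>\<^sub>E F" unfolding p'_def by (auto intro!: PF pairE_elems zI)
    moreover have "p' m + p' n = Min ((\<lambda>a. p' (padd J nu a m n)) ` J)" if mn: "m \<in> EN" "n \<in> EN" for m n
    proof -
      have "p' m + p' n = Min ((\<lambda>\<alpha>. P (padd (I\<times>J) (prod_mu mu nu) \<alpha> (pairE I J (zel I) m) (pairE I J (zel I) n))) ` (I\<times>J))"
        using mn zI unfolding p'_def by (simp add: Padd pairE_elems)
      also have "(\<lambda>\<alpha>. P (padd (I\<times>J) (prod_mu mu nu) \<alpha> (pairE I J (zel I) m) (pairE I J (zel I) n))) ` (I\<times>J)
          = (\<lambda>\<alpha>. p' (padd J nu (snd \<alpha>) m n)) ` (I\<times>J)"
      proof (rule image_cong[OF refl])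
        fix x assume "x \<in> I \<times> J"
        then obtain a b where x: "x = (a,b)" "a \<in> I" "b \<in> J" by auto
        show "P (padd (I\<times>J) (prod_mu mu nu) x (pairE I J (zel I) m) (pairE I J (zel I) n)) = p' (padd J nu (snd x) m n)"
          using x mn by (simp add: padd_pairE padd_zel[OF R PI] p'_def padd_elems[OF R PJ])
      qed
      also have "\<dots> = (\<lambda>a. p' (padd J nu a m n)) ` J" by (rule image_snd_comp[OF Ine])
      finally show ?thesis .
    qed
    moreover have "p' (pscale J nu a c m) = c * p' m" if "c \<in> F" "c \<ge> 0" "m \<in> EN" "a \<in> J" for c m a
    proof -
      have "p' (pscale J nu a c m) = P (pairE I J (pscale I mu a0 c (zel I)) (pscale J nu a c m))"
        using that by (simp add: p'_def pscale_elems[OF R PJ] pscale_zel[OF R PI a0])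
      also have "\<dots> = P (pscale (I\<times>J) (prod_mu mu nu) (a0,a) c (pairE I J (zel I) m))"
        using that a0 by (simp add: pscale_pairE)
      also have "\<dots> = c * P (pairE I J (zel I) m)" by (rule Psc) (use that a0 zI in \<open>auto intro: pairE_elems\<close>)
      also have "\<dots> = c * p' m" using that by (simp add: p'_def)
      finally show ?thesis .
    qed
    ultimately show ?thesis by (rule SpI)
  qed
  have "S (p,p') = P"
  proof (rule ext)
    fix E show "S (p,p') E = P E"
    proof (cases "E \<in> EP")
      case True
      from elemsP[OF Ine Jne True] obtain m m' where mm: "m \<in> EM" "m' \<in> EN" "E = pairE I J m m'" by blast
      have "S (p,p') E = P (pairE I J m (zel J)) + P (pairE I J (zel I) m')"
        using mm sp_app by (simp add: p_def p'_def)
      also have "\<dots> = Min ((\<lambda>\<alpha>. P (padd (I\<times>J) (prod_mu mu nu) \<alpha> (pairE I J m (zel J)) (pairE I J (zel I) m'))) ` (I\<times>J))"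
        using mm zI zJ by (simp add: Padd pairE_elems)
      also have "(\<lambda>\<alpha>. P (padd (I\<times>J) (prod_mu mu nu) \<alpha> (pairE I J m (zel J)) (pairE I J (zel I) m'))) ` (I\<times>J)
          = (\<lambda>\<alpha>. P E) ` (I\<times>J)"
      proof (rule image_cong[OF refl])
        fix x assume "x \<in> I \<times> J"
        then obtain a b where x: "x = (a,b)" "a \<in> I" "b \<in> J" by auto
        show "P (padd (I\<times>J) (prod_mu mu nu) x (pairE I J m (zel J)) (pairE I J (zel I) m')) = P E"
          using x mm by (simp add: padd_pairE padd_zel_r[OF R PI] padd_zel_l[OF R PJ])
      qed
      also have "\<dots> = {P E}" using Ine Jne by auto
      finally show ?thesis by simp
    next
      case False
      have "P E = undefined" by (rule PiE_arb[OF SpD1[OF P] False])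
      then show ?thesis using False by (simp add: sum_point_def)
    qed
  qed
  then show ?thesis using p p' by (intro image_eqI[where x="(p,p')"]) simp_all
qed

lemma S_chart: assumes a: "\<alpha> \<in> I" "\<alpha>' \<in> J"
  shows "S ` (Sp_chart F I mu \<alpha> \<times> Sp_chart F J nu \<alpha>') \<subseteq> Sp_chart F (I \<times> J) (prod_mu mu nu) (\<alpha>, \<alpha>')"
proof clarify
  fix p p' assume p: "p \<in> Sp_chart F I mu \<alpha>" and p': "p' \<in> Sp_chart F J nu \<alpha>'"
  have pS: "p \<in> Sp F I mu" and p'S: "p' \<in> Sp F J nu" using p p' by (auto simp: Sp_chart_def)
  have fl: "F_linear_functional F (\<lambda>x. p (chart_inv I mu \<alpha> x))"
    and fl': "F_linear_functional F (\<lambda>x. p' (chart_inv J nu \<alpha>' x))" using p p' by (auto simp: Sp_chart_def)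
  have fl1: "\<forall>x\<in>Lat F. \<forall>y\<in>Lat F. p (chart_inv I mu \<alpha> (x + y)) = p (chart_inv I mu \<alpha> x) + p (chart_inv I mu \<alpha> y)"
    and fl2: "\<forall>c\<in>F. \<forall>x\<in>Lat F. p (chart_inv I mu \<alpha> (c *\<^sub>R x)) = c * p (chart_inv I mu \<alpha> x)"
    using fl unfolding F_linear_functional_def by (rule conjunct1, rule conjunct2)
  have fl1': "\<forall>x\<in>Lat F. \<forall>y\<in>Lat F. p' (chart_inv J nu \<alpha>' (x + y)) = p' (chart_inv J nu \<alpha>' x) + p' (chart_inv J nu \<alpha>' y)"
    and fl2': "\<forall>c\<in>F. \<forall>x\<in>Lat F. p' (chart_inv J nu \<alpha>' (c *\<^sub>R x)) = c * p' (chart_inv J nu \<alpha>' x)"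
    using fl' unfolding F_linear_functional_def by (rule conjunct1, rule conjunct2)
  have key: "S (p,p') (chart_inv (I\<times>J) (prod_mu mu nu) (\<alpha>,\<alpha>') (x,y)) = p (chart_inv I mu \<alpha> x) + p' (chart_inv J nu \<alpha>' y)"
    if "x \<in> Lat F" "y \<in> Lat F" for x y
    unfolding chart_prod by (rule sp_app[OF elemsI[OF a(1) that(1)] elemsI[OF a(2) that(2)]])
  have "F_linear_functional F (\<lambda>w. S (p,p') (chart_inv (I\<times>J) (prod_mu mu nu) (\<alpha>,\<alpha>') w))"
    unfolding F_linear_functional_def
  proof (intro conjI ballI)
    fix w w' :: "'a \<times> 'b" assume w: "w \<in> Lat F" and w': "w' \<in> Lat F"
    obtain x y x' y' where e: "w = (x,y)" "w' = (x',y')" by (cases w, cases w') auto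
    with w w' have l: "x \<in> Lat F" "y \<in> Lat F" "x' \<in> Lat F" "y' \<in> Lat F" by (auto simp: Lat_prod)
    show "S (p,p') (chart_inv (I\<times>J) (prod_mu mu nu) (\<alpha>,\<alpha>') (w + w')) =
        S (p,p') (chart_inv (I\<times>J) (prod_mu mu nu) (\<alpha>,\<alpha>') w) + S (p,p') (chart_inv (I\<times>J) (prod_mu mu nu) (\<alpha>,\<alpha>') w')"
    proof -
      have "w + w' = (x + x', y + y')" using e by simp
      then have "S (p,p') (chart_inv (I\<times>J) (prod_mu mu nu) (\<alpha>,\<alpha>') (w + w')) = p (chart_inv I mu \<alpha> (x + x')) + p' (chart_inv J nu \<alpha>' (y + y'))"
        using key[OF Lat_add[OF R l(1,3)] Lat_add[OF R l(2,4)]] by simp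
      also have "\<dots> = (p (chart_inv I mu \<alpha> x) + p' (chart_inv J nu \<alpha>' y)) + (p (chart_inv I mu \<alpha> x') + p' (chart_inv J nu \<alpha>' y'))"
        using fl1 fl1' l by simp
      finally show ?thesis using key[OF l(1,2)] key[OF l(3,4)] e by simp
    qed
  next
    fix c and w :: "'a \<times> 'b" assume c: "c \<in> F" and w: "w \<in> Lat F"
    obtain x y where e: "w = (x,y)" by (cases w) auto
    with w have l: "x \<in> Lat F" "y \<in> Lat F" by (auto simp: Lat_prod)
    show "S (p,p') (chart_inv (I\<times>J) (prod_mu mu nu) (\<alpha>,\<alpha>') (c *\<^sub>R w)) =
        c * S (p,p') (chart_inv (I\<times>J) (prod_mu mu nu) (\<alpha>,\<alpha>') w)"
    proof -
      have "c *\<^sub>R w = (c *\<^sub>R x, c *\<^sub>R y)" using e by simp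
      then have "S (p,p') (chart_inv (I\<times>J) (prod_mu mu nu) (\<alpha>,\<alpha>') (c *\<^sub>R w)) = p (chart_inv I mu \<alpha> (c *\<^sub>R x)) + p' (chart_inv J nu \<alpha>' (c *\<^sub>R y))"
        using key[OF Lat_scale[OF R c l(1)] Lat_scale[OF R c l(2)]] by simp
      also have "\<dots> = c * (p (chart_inv I mu \<alpha> x) + p' (chart_inv J nu \<alpha>' y))"
        using fl2 fl2' l c by (simp add: distrib_left)
      finally show ?thesis using key[OF l(1,2)] e by simp
    qed
  qed
  then show "S (p,p') \<in> Sp_chart F (I \<times> J) (prod_mu mu nu) (\<alpha>, \<alpha>')"
    using S_in[OF pS p'S] by (simp add: Sp_chart_def)
qed

lemma main: "bij_betw S (Sp F I mu \<times> Sp F J nu) (Sp F (I \<times> J) (prod_mu mu nu))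
    \<and> (\<forall>\<alpha>\<in>I. \<forall>\<alpha>'\<in>J. S ` (Sp_chart F I mu \<alpha> \<times> Sp_chart F J nu \<alpha>')
          \<subseteq> Sp_chart F (I \<times> J) (prod_mu mu nu) (\<alpha>, \<alpha>'))"
proof -
  have "S ` (Sp F I mu \<times> Sp F J nu) = Sp F (I \<times> J) (prod_mu mu nu)"
  proof
    show "S ` (Sp F I mu \<times> Sp F J nu) \<subseteq> Sp F (I \<times> J) (prod_mu mu nu)"
      by (rule image_subsetI) (auto intro: S_in)
    show "Sp F (I \<times> J) (prod_mu mu nu) \<subseteq> S ` (Sp F I mu \<times> Sp F J nu)"
      by (rule subsetI) (rule S_surj)
  qed
  then show ?thesis using S_inj S_chart by (simp add: bij_betw_def)
qed

end

theorem mainTheorem5: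
  fixes F :: "real set"
    and I :: "'i set" and mu :: "'i \<Rightarrow> 'i \<Rightarrow> 'a::euclidean_space \<Rightarrow> 'a"
    and J :: "'j set" and nu :: "'j \<Rightarrow> 'j \<Rightarrow> 'b::euclidean_space \<Rightarrow> 'b"
  assumes "subring_R F"
    and "polyptych F I mu" and "finite I"
    and "polyptych F J nu" and "finite J"
  shows "bij_betw (sum_point F I mu J nu) (Sp F I mu \<times> Sp F J nu) (Sp F (I \<times> J) (prod_mu mu nu))
    \<and> (\<forall>\<alpha>\<in>I. \<forall>\<alpha>'\<in>J. sum_point F I mu J nu ` (Sp_chart F I mu \<alpha> \<times> Sp_chart F J nu \<alpha>')
          \<subseteq> Sp_chart F (I \<times> J) (prod_mu mu nu) (\<alpha>, \<alpha>'))"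
proof -
  interpret PP F I mu J nu using assms by (unfold_locales) auto
  show ?thesis by (rule main)
qed

end
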